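(* For every bipartite graph $G$ there is a monotone CNF-formula $F$ whose incidence graph is $G$ and such that $\mathbf{psw}(F)\ge 2^{\mathbf{mimw}(G)/2}$.
   Context: A CNF-formula is monotone if all literals are positive. Its incidence graph $I(F)$ is the bipartite graph on $\mathrm{var}(F)\cup\mathrm{cla}(F)$ with $x\sim C$ iff $x$ occurs in $C$. A branch decomposition $(T,\delta)$ of a graph $G$ is a tree with maximum degree $3$ and a bijection from its leaves to $V(G)$; each node $x$ of $T$ (rooted) yields the cut $(A,\bar A)$, $A$ = labels of leaves below $x$. For a symmetric $f$ on cuts, the $f$-width of $(T,\delta)$ is the max of $f$ over its cuts and the $f$-branch width of $G$ is the min over branch decompositions. $\mathbf{mimw}(G)$ is the $f$-branch width for $f(A,\bar A)$ = size of a maximum induced matching in the graph $G[A,\bar A]$ (vertex set $V(G)$, edges of $G$ between $A$ and $\bar A$). For a CNF $F$, a set $\mathcal C$ of clauses is precisely satisfiable if some assignment satisfies exactly the clauses in $\mathcal C$; the PS-value of $F$ is the number of precisely satisfiable clause sets. For $X\subseteq\mathrm{var}(F)$ and $\mathcal C\subseteq\mathrm{cla}(F)$, $F_{X,\mathcal C}$ is obtained by deleting all clauses not in $\mathcal C$ and then all variables not in $X$ from the remaining clauses. For a cut $(A,\bar A)$ of $I(F)$ with $X=A\cap\mathrm{var}(F)$, $\bar X=\bar A\cap\mathrm{var}(F)$, $\mathcal C=A\cap\mathrm{cla}(F)$, $\bar{\mathcal C}=\bar A\cap\mathrm{cla}(F)$, let $ps(A,\bar A)$ be the maximum of the PS-values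 of $F_{X,\bar{\mathcal C}}$ and $F_{\bar X,\mathcal C}$. $\mathbf{psw}(F)$ is the $ps$-branch width of $I(F)$. *)

theory Defs
  imports Complex_Main
begin

definition simple_graph :: "'v set \<Rightarrow> ('v \<Rightarrow> 'v \<Rightarrow> bool) \<Rightarrow> bool" where
  "simple_graph V E \<longleftrightarrow> finite V \<and> (\<forall>u v. E u v \<longrightarrow> E v u) \<and> (\<forall>u. \<not> E u u)
     \<and> (\<forall>u v. E u v \<longrightarrow> u \<in> V \<and> v \<in> V)"

definition bipartite :: "'v set \<Rightarrow> ('v \<Rightarrow> 'v \<Rightarrow> bool) \<Rightarrow> bool" where
  "bipartite V E \<longleftrightarrow> (\<exists>P. P \<subseteq> V \<and> (\<forall>u v. E u v \<longrightarrow> (u \<in> P \<longleftrightarrow> v \<notin> P)))"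

definition induced_matching :: "'v set \<Rightarrow> ('v \<Rightarrow> 'v \<Rightarrow> bool) \<Rightarrow> 'v set set \<Rightarrow> bool" where
  "induced_matching V E M \<longleftrightarrow>
     M \<subseteq> {{u, v} | u v. u \<in> V \<and> v \<in> V \<and> E u v}
     \<and> (\<forall>e\<in>M. \<forall>e'\<in>M. e \<noteq> e' \<longrightarrow> e \<inter> e' = {})
     \<and> (\<forall>e\<in>M. \<forall>e'\<in>M. e \<noteq> e' \<longrightarrow> \<not> (\<exists>u\<in>e. \<exists>v\<in>e'. E u v))"

definition cut_edges :: "('v \<Rightarrow> 'v \<Rightarrow> bool) \<Rightarrow> 'v set \<Rightarrow> 'v \<Rightarrow> 'v \<Rightarrow> bool" where
  "cut_edges E A u v \<longleftrightarrow> E u v \<and> (u \<in> A \<longleftrightarrow> v \<notin> A)"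

definition mim :: "'v set \<Rightarrow> ('v \<Rightarrow> 'v \<Rightarrow> bool) \<Rightarrow> 'v set \<Rightarrow> nat" where
  "mim V E A = Max {card M | M. induced_matching V (cut_edges E A) M}"

text \<open>A rooted tree; \<open>Leaf v\<close> are the leaves of T carrying the label \<open>\<delta>\<close>.\<close>
datatype 'v dtree = Leaf 'v | Inner "'v dtree list"

fun leaves :: "'v dtree \<Rightarrow> 'v list" where
  "leaves (Leaf v) = [v]"
| "leaves (Inner ts) = concat (map leaves ts)"

fun subtrees :: "'v dtree \<Rightarrow> 'v dtree set" where
  "subtrees (Leaf v) = {Leaf v}"
| "subtrees (Inner ts) = insert (Inner ts) (\<Union>t\<in>set ts. subtrees t)"

text \<open>Max degree 3: a non-root inner node has 1 or 2 children (degree 2 or 3);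
  the root, if inner, has 2 or 3 children (so it is not a leaf of T).\<close>
fun nonroot_ok :: "'v dtree \<Rightarrow> bool" where
  "nonroot_ok (Leaf v) = True"
| "nonroot_ok (Inner ts) = (length ts \<in> {1, 2} \<and> (\<forall>t\<in>set ts. nonroot_ok t))"

fun root_ok :: "'v dtree \<Rightarrow> bool" where
  "root_ok (Leaf v) = True"
| "root_ok (Inner ts) = (length ts \<in> {2, 3} \<and> (\<forall>t\<in>set ts. nonroot_ok t))"

definition branch_decomp :: "'v set \<Rightarrow> 'v dtree \<Rightarrow> bool" where
  "branch_decomp V T \<longleftrightarrow> root_ok T \<and> distinct (leaves T) \<and> set (leaves T) = V"

text \<open>The cuts (A, V - A) of T, given by their side A = leaf labels below a node.\<close>
definition cuts :: "'v dtree \<Rightarrow> 'v set set" where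
  "cuts T = {set (leaves s) | s. s \<in> subtrees T}"

text \<open>f A stands for f(A, V - A).\<close>
definition f_width :: "('v set \<Rightarrow> nat) \<Rightarrow> 'v dtree \<Rightarrow> nat" where
  "f_width f T = Max (f ` cuts T)"

definition f_branchwidth :: "'v set \<Rightarrow> ('v set \<Rightarrow> nat) \<Rightarrow> nat" where
  "f_branchwidth V f = Min {f_width f T | T. branch_decomp V T}"

definition mimw :: "'v set \<Rightarrow> ('v \<Rightarrow> 'v \<Rightarrow> bool) \<Rightarrow> nat" where
  "mimw V E = f_branchwidth V (mim V E)"

text \<open>A CNF formula with variables and (named) clauses; \<open>lits F C\<close> is the set of literals
  of clause C, a literal being (x, True) for x and (x, False) for the negation of x.
  Variables and clauses are both drawn from type 'v, so that the incidence graph lives on 'v.\<close>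
record 'v cnf =
  vars :: "'v set"
  clas :: "'v set"
  lits :: "'v \<Rightarrow> ('v \<times> bool) set"

definition cnf_wf :: "'v cnf \<Rightarrow> bool" where
  "cnf_wf F \<longleftrightarrow> finite (vars F) \<and> finite (clas F) \<and> vars F \<inter> clas F = {}
     \<and> (\<forall>C\<in>clas F. lits F C \<subseteq> vars F \<times> UNIV)"

definition monotone_cnf :: "'v cnf \<Rightarrow> bool" where
  "monotone_cnf F \<longleftrightarrow> (\<forall>C\<in>clas F. \<forall>(x, b)\<in>lits F C. b)"

definition occurs :: "'v cnf \<Rightarrow> 'v \<Rightarrow> 'v \<Rightarrow> bool" where
  "occurs F x C \<longleftrightarrow> (\<exists>b. (x, b) \<in> lits F C)"

definition inc_edge :: "'v cnf \<Rightarrow> 'v \<Rightarrow> 'v \<Rightarrow> bool" where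
  "inc_edge F u v \<longleftrightarrow>
     (u \<in> vars F \<and> v \<in> clas F \<and> occurs F u v) \<or> (v \<in> vars F \<and> u \<in> clas F \<and> occurs F v u)"

definition sat_clause :: "('v \<Rightarrow> bool) \<Rightarrow> ('v \<times> bool) set \<Rightarrow> bool" where
  "sat_clause \<alpha> L \<longleftrightarrow> (\<exists>(x, b)\<in>L. \<alpha> x = b)"

definition ps_value :: "'v cnf \<Rightarrow> nat" where
  "ps_value F = card {{C \<in> clas F. sat_clause \<alpha> (lits F C)} | \<alpha>. True}"

definition restrict_cnf :: "'v cnf \<Rightarrow> 'v set \<Rightarrow> 'v set \<Rightarrow> 'v cnf" where
  "restrict_cnf F X Cs = \<lparr>vars = X, clas = Cs, lits = (\<lambda>C. {(x, b) \<in> lits F C. x \<in> X})\<rparr>"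

definition ps :: "'v cnf \<Rightarrow> 'v set \<Rightarrow> nat" where
  "ps F A = max (ps_value (restrict_cnf F (A \<inter> vars F) (clas F - A)))
                (ps_value (restrict_cnf F (vars F - A) (A \<inter> clas F)))"

definition psw :: "'v cnf \<Rightarrow> nat" where
  "psw F = f_branchwidth (vars F \<union> clas F) (ps F)"

end

theory Submission
  imports Defs
begin

definition mkF :: "'v set \<Rightarrow> ('v \<Rightarrow> 'v \<Rightarrow> bool) \<Rightarrow> 'v set \<Rightarrow> 'v cnf" where
  "mkF V E P = \<lparr>vars = P, clas = V - P, lits = (\<lambda>C. {(x, True) | x. x \<in> P \<and> E x C})\<rparr>"

lemma ps_lower:
  fixes G :: "'v cnf" and N :: "'a set" and v c :: "'a \<Rightarrow> 'v"
  assumes fin: "finite (clas G)" "finite N"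
    and cin: "\<forall>e\<in>N. c e \<in> clas G"
    and pos: "\<forall>e\<in>N. \<forall>(x,b)\<in>lits G (c e). b"
    and adj: "\<forall>e\<in>N. \<forall>f\<in>N. (v f, True) \<in> lits G (c e) \<longleftrightarrow> f = e"
  shows "2 ^ card N \<le> ps_value G"
proof -
  define g where "g S = {C \<in> clas G. sat_clause (\<lambda>x. x \<in> v ` S) (lits G C)}" for S
  have key: "c e \<in> g S \<longleftrightarrow> e \<in> S" if "e \<in> N" "S \<subseteq> N" for e S
  proof -
    have "sat_clause (\<lambda>x. x \<in> v ` S) (lits G (c e)) \<longleftrightarrow> e \<in> S"
    proof
      assume "sat_clause (\<lambda>x. x \<in> v ` S) (lits G (c e))"
      then obtain x b where xb: "(x,b) \<in> lits G (c e)" "(x \<in> v ` S) = b"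
        unfolding sat_clause_def by auto
      with pos that have b by auto
      with xb obtain f where f: "f \<in> S" "x = v f" by auto
      have "(v f, True) \<in> lits G (c e)" using xb f \<open>b\<close> by simp
      hence "f = e" using adj that f by blast
      with f show "e \<in> S" by simp
    next
      assume "e \<in> S"
      moreover have "(v e, True) \<in> lits G (c e)" using adj that by auto
      ultimately show "sat_clause (\<lambda>x. x \<in> v ` S) (lits G (c e))"
        unfolding sat_clause_def by (intro bexI[of _ "(v e, True)"]) auto
    qed
    then show ?thesis using cin that by (auto simp: g_def)
  qed
  have inj: "inj_on g (Pow N)"
  proof (rule inj_onI)
    fix S S' assume a: "S \<in> Pow N" "S' \<in> Pow N" "g S = g S'"
    show "S = S'"
    proof
      show "S \<subseteq> S'" using a key by blast
      show "S' \<subseteq> S" using a key by blast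
    qed
  qed
  have sub: "g ` Pow N \<subseteq> {{C \<in> clas G. sat_clause \<alpha> (lits G C)} | \<alpha>. True}"
    by (auto simp: g_def)
  have finset: "finite {{C \<in> clas G. sat_clause \<alpha> (lits G C)} | \<alpha>. True}"
    by (rule finite_subset[of _ "Pow (clas G)"]) (auto simp: fin)
  have "2 ^ card N = card (g ` Pow N)" using card_image[OF inj] card_Pow[OF fin(2)] by simp
  also have "\<dots> \<le> ps_value G" unfolding ps_value_def by (rule card_mono[OF finset sub])
  finally show ?thesis .
qed

lemma ps_ge:
  assumes sg: "simple_graph V E" and bp: "\<forall>u v. E u v \<longrightarrow> (u \<in> P \<longleftrightarrow> v \<notin> P)" and PV: "P \<subseteq> V"
  shows "2 powr (real (mim V E A) / 2) \<le> real (ps (mkF V E P) A)"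
proof -
  from sg have fin: "finite V" and sym: "\<And>u v. E u v \<Longrightarrow> E v u"
    and inV: "\<And>u v. E u v \<Longrightarrow> u \<in> V \<and> v \<in> V" by (auto simp: simple_graph_def)
  let ?S = "{card M | M. induced_matching V (cut_edges E A) M}"
  have imP: "M \<subseteq> Pow V" if "induced_matching V (cut_edges E A) M" for M
  proof -
    have "M \<subseteq> {{u, v} | u v. u \<in> V \<and> v \<in> V \<and> cut_edges E A u v}"
      using that unfolding induced_matching_def by (rule conjunct1)
    also have "\<dots> \<subseteq> Pow V" by blast
    finally show ?thesis .
  qed
  have "?S \<subseteq> card ` Pow (Pow V)" using imP by blast
  hence finS: "finite ?S" using fin by (meson finite_Pow_iff finite_imageI finite_subset)
  have "induced_matching V (cut_edges E A) {}" by (simp add: induced_matching_def)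
  hence neS: "?S \<noteq> {}" by blast
  obtain M where M: "induced_matching V (cut_edges E A) M" "card M = mim V E A"
    using Max_in[OF finS neS] unfolding mim_def by auto
  have finM: "finite M" using imP[OF M(1)] fin by (meson finite_Pow_iff finite_subset)
  define vr where "vr e = (SOME x. x \<in> e \<and> x \<in> P)" for e :: "'a set"
  define cl where "cl e = (SOME x. x \<in> e \<and> x \<notin> P)" for e :: "'a set"
  have ed: "vr e \<in> e \<and> cl e \<in> e \<and> vr e \<in> P \<and> cl e \<notin> P \<and> E (vr e) (cl e) \<and> (vr e \<in> A \<longleftrightarrow> cl e \<notin> A)
     \<and> vr e \<in> V \<and> cl e \<in> V" if "e \<in> M" for e
  proof -
    have "e \<in> {{u, v} | u v. u \<in> V \<and> v \<in> V \<and> cut_edges E A u v}"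
      using subsetD[OF conjunct1[OF M(1)[unfolded induced_matching_def]] that] .
    then obtain u w where uw: "e = {u,w}" "u\<in>V" "w\<in>V" "cut_edges E A u w"
      by blast
    hence Euw: "E u w" and cutuw: "u\<in>A \<longleftrightarrow> w\<notin>A" by (auto simp: cut_edges_def)
    show ?thesis
    proof (cases "u \<in> P")
      case True
      then have wP: "w \<notin> P" using bp Euw by auto
      have "vr e = u" unfolding vr_def using True wP uw(1) by (intro some_equality) auto
      moreover have "cl e = w" unfolding cl_def using True wP uw(1) by (intro some_equality) auto
      ultimately show ?thesis using uw Euw cutuw True wP by auto
    next
      case False
      then have wP: "w \<in> P" using bp Euw by auto
      have "vr e = w" unfolding vr_def using False wP uw(1) by (intro some_equality) auto
      moreover have "cl e = u" unfolding cl_def using False wP uw(1) by (intro some_equality) auto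
      ultimately show ?thesis using uw Euw cutuw False wP sym by auto
    qed
  qed
  have nadj: "\<not> E (vr f) (cl e)" if "e\<in>M" "f\<in>M" "e\<noteq>f" "vr f \<in> A \<longleftrightarrow> cl e \<notin> A" for e f
  proof
    assume Ef: "E (vr f) (cl e)"
    have "cut_edges E A (vr f) (cl e)" using Ef that(4) by (simp add: cut_edges_def)
    moreover have "vr f \<in> f" "cl e \<in> e" using ed that by auto
    ultimately show False using M(1) that unfolding induced_matching_def by blast
  qed
  define M1 where "M1 = {e\<in>M. vr e \<in> A}"
  define M2 where "M2 = {e\<in>M. vr e \<notin> A}"
  have cM: "card M = card M1 + card M2"
  proof -
    have "M = M1 \<union> M2" "M1 \<inter> M2 = {}" by (auto simp: M1_def M2_def)
    moreover have "finite M1" "finite M2" using finM by (auto simp: M1_def M2_def)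
    ultimately show ?thesis using card_Un_disjoint by metis
  qed
  let ?F = "mkF V E P"
  have litsR: "lits (restrict_cnf ?F X Cs) C = {(x,True)| x. x \<in> P \<and> E x C \<and> x \<in> X}" for X Cs C
    by (auto simp: restrict_cnf_def mkF_def)
  have p1: "2 ^ card M1 \<le> ps_value (restrict_cnf ?F (A \<inter> vars ?F) (clas ?F - A))"
  proof (rule ps_lower[where v = vr and c = cl])
    show "finite (clas (restrict_cnf ?F (A \<inter> vars ?F) (clas ?F - A)))"
      using fin by (simp add: restrict_cnf_def mkF_def)
    show "finite M1" using finM by (simp add: M1_def)
    show "\<forall>e\<in>M1. cl e \<in> clas (restrict_cnf ?F (A \<inter> vars ?F) (clas ?F - A))"
      using ed by (auto simp: restrict_cnf_def mkF_def M1_def)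
    show "\<forall>e\<in>M1. \<forall>(x, b)\<in>lits (restrict_cnf ?F (A \<inter> vars ?F) (clas ?F - A)) (cl e). b"
      by (auto simp: litsR)
    show "\<forall>e\<in>M1. \<forall>f\<in>M1. ((vr f, True) \<in> lits (restrict_cnf ?F (A \<inter> vars ?F) (clas ?F - A)) (cl e)) = (f = e)"
    proof (intro ballI)
      fix e f assume "e \<in> M1" "f \<in> M1"
      then show "((vr f, True) \<in> lits (restrict_cnf ?F (A \<inter> vars ?F) (clas ?F - A)) (cl e)) = (f = e)"
      proof -
        assume ef: "e \<in> M1" "f \<in> M1"
        have "cl e \<notin> A" using ed[of e] ef by (auto simp: M1_def)
        then have "f \<noteq> e \<Longrightarrow> \<not> E (vr f) (cl e)" using nadj[of e f] ef by (auto simp: M1_def)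
        then show ?thesis unfolding litsR using ed[of e] ed[of f] ef by (auto simp: M1_def mkF_def)
      qed
    qed
  qed
  have p2: "2 ^ card M2 \<le> ps_value (restrict_cnf ?F (vars ?F - A) (A \<inter> clas ?F))"
  proof (rule ps_lower[where v = vr and c = cl])
    show "finite (clas (restrict_cnf ?F (vars ?F - A) (A \<inter> clas ?F)))"
      using fin by (simp add: restrict_cnf_def mkF_def)
    show "finite M2" using finM by (simp add: M2_def)
    show "\<forall>e\<in>M2. cl e \<in> clas (restrict_cnf ?F (vars ?F - A) (A \<inter> clas ?F))"
      using ed by (auto simp: restrict_cnf_def mkF_def M2_def)
    show "\<forall>e\<in>M2. \<forall>(x, b)\<in>lits (restrict_cnf ?F (vars ?F - A) (A \<inter> clas ?F)) (cl e). b"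
      by (auto simp: litsR)
    show "\<forall>e\<in>M2. \<forall>f\<in>M2. ((vr f, True) \<in> lits (restrict_cnf ?F (vars ?F - A) (A \<inter> clas ?F)) (cl e)) = (f = e)"
    proof (intro ballI)
      fix e f assume "e \<in> M2" "f \<in> M2"
      then show "((vr f, True) \<in> lits (restrict_cnf ?F (vars ?F - A) (A \<inter> clas ?F)) (cl e)) = (f = e)"
      proof -
        assume ef: "e \<in> M2" "f \<in> M2"
        have "cl e \<in> A" using ed[of e] ef by (auto simp: M2_def)
        then have "f \<noteq> e \<Longrightarrow> \<not> E (vr f) (cl e)" using nadj[of e f] ef by (auto simp: M2_def)
        then show ?thesis unfolding litsR using ed[of e] ed[of f] ef by (auto simp: M2_def mkF_def)
      qed
    qed
  qed
  have "(2::nat) ^ max (card M1) (card M2) \<le> ps ?F A"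
    using p1 p2 unfolding ps_def by (auto simp: max_def)
  hence r: "(2::real) ^ max (card M1) (card M2) \<le> real (ps ?F A)"
    by (metis of_nat_le_iff of_nat_numeral of_nat_power)
  have "2 powr (real (mim V E A) / 2) \<le> 2 powr (real (max (card M1) (card M2)))"
    using M(2) cM by (intro powr_mono) (auto simp: max_def)
  also have "\<dots> = 2 ^ max (card M1) (card M2)" by (simp add: powr_realpow)
  finally show ?thesis using r by linarith
qed

lemma leaves_sub: "s \<in> subtrees T \<Longrightarrow> set (leaves s) \<subseteq> set (leaves T)"
  by (induction T) auto

lemma self_sub: "T \<in> subtrees T"
  by (cases T) auto

lemma cuts_sub: "branch_decomp V T \<Longrightarrow> cuts T \<subseteq> Pow V"
proof
  fix X assume bd: "branch_decomp V T" and "X \<in> cuts T"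
  then obtain s where s: "X = set (leaves s)" "s \<in> subtrees T" unfolding cuts_def by blast
  then have "X \<subseteq> set (leaves T)" using leaves_sub by simp
  then show "X \<in> Pow V" using bd unfolding branch_decomp_def by simp
qed

lemma cuts_ne: "cuts T \<noteq> {}"
  unfolding cuts_def using self_sub by blast

lemma cuts_fin: "branch_decomp V T \<Longrightarrow> finite V \<Longrightarrow> finite (cuts T)"
  using cuts_sub finite_subset finite_Pow_iff by metis

lemma width_in: "branch_decomp V T \<Longrightarrow> finite V \<Longrightarrow> f_width f T \<in> f ` cuts T"
  unfolding f_width_def
  by (rule Max_in) (simp_all add: cuts_fin cuts_ne)

lemma width_ge: "branch_decomp V T \<Longrightarrow> finite V \<Longrightarrow> A \<in> cuts T \<Longrightarrow> f A \<le> f_width f T"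
  unfolding f_width_def
  by (rule Max_ge) (simp_all add: cuts_fin)

lemma bw_set_fin: "finite V \<Longrightarrow> finite {f_width f T | T. branch_decomp V T}"
proof -
  assume fin: "finite V"
  have "{f_width f T | T. branch_decomp V T} \<subseteq> f ` Pow V"
  proof
    fix y assume "y \<in> {f_width f T | T. branch_decomp V T}"
    then obtain T where T: "branch_decomp V T" "y = f_width f T" by blast
    then have "y \<in> f ` cuts T" using width_in fin by simp
    then show "y \<in> f ` Pow V" using cuts_sub[OF T(1)] by blast
  qed
  moreover have "finite (f ` Pow V)" using fin by simp
  ultimately show ?thesis by (rule finite_subset)
qed

fun chain :: "'v list \<Rightarrow> 'v dtree" where
  "chain [] = Inner []"
| "chain [x] = Leaf x"
| "chain (x # y # zs) = Inner [Leaf x, chain (y # zs)]"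

lemma chain_ok: "xs \<noteq> [] \<Longrightarrow> nonroot_ok (chain xs) \<and> leaves (chain xs) = xs"
  by (induction xs rule: chain.induct) auto

lemma bd_exists: "finite V \<Longrightarrow> V \<noteq> {} \<Longrightarrow> \<exists>T. branch_decomp V T"
proof -
  assume "finite V" "V \<noteq> {}"
  then obtain xs where xs: "distinct xs" "set xs = V" using finite_distinct_list by blast
  then obtain x ys where xys: "xs = x # ys" using \<open>V \<noteq> {}\<close> by (cases xs) auto
  show ?thesis
  proof (cases ys)
    case Nil
    then show ?thesis using xs xys by (intro exI[of _ "Leaf x"]) (auto simp: branch_decomp_def)
  next
    case (Cons y zs)
    then show ?thesis using xs xys chain_ok[of ys]
      by (intro exI[of _ "Inner [Leaf x, chain ys]"]) (auto simp: branch_decomp_def)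
  qed
qed

theorem lemma10:
  fixes V :: "'v set" and E :: "'v \<Rightarrow> 'v \<Rightarrow> bool"
  assumes "simple_graph V E" and "V \<noteq> {}" and "bipartite V E"
  shows "\<exists>F :: 'v cnf. cnf_wf F \<and> monotone_cnf F
           \<and> vars F \<union> clas F = V \<and> (\<forall>u v. inc_edge F u v \<longleftrightarrow> E u v)
           \<and> real (psw F) \<ge> 2 powr (real (mimw V E) / 2)"
proof -
  from assms(3) obtain P where PV: "P \<subseteq> V" and bp: "\<forall>u v. E u v \<longrightarrow> (u \<in> P \<longleftrightarrow> v \<notin> P)"
    unfolding bipartite_def by blast
  from assms(1) have fin: "finite V" and sym: "\<And>u v. E u v \<Longrightarrow> E v u"
    and inV: "\<And>u v. E u v \<Longrightarrow> u \<in> V \<and> v \<in> V" by (auto simp: simple_graph_def)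
  define F where "F = mkF V E P"
  have wf: "cnf_wf F" using fin PV by (auto simp: F_def mkF_def cnf_wf_def intro: finite_subset)
  have mono: "monotone_cnf F" by (auto simp: F_def mkF_def monotone_cnf_def)
  have vc: "vars F \<union> clas F = V" using PV by (auto simp: F_def mkF_def)
  have ie: "\<forall>u v. inc_edge F u v \<longleftrightarrow> E u v"
    using bp sym inV by (auto simp: F_def mkF_def inc_edge_def occurs_def)
  let ?S1 = "{f_width (ps F) T | T. branch_decomp V T}"
  let ?S2 = "{f_width (mim V E) T | T. branch_decomp V T}"
  obtain T1 where "branch_decomp V T1" using bd_exists fin assms(2) by blast
  hence ne1: "?S1 \<noteq> {}" and ne2: "?S2 \<noteq> {}" by auto
  have "psw F \<in> ?S1" unfolding psw_def f_branchwidth_def vc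
    using Min_in[OF bw_set_fin[OF fin] ne1] .
  then obtain T0 where T0: "branch_decomp V T0" "psw F = f_width (ps F) T0" by blast
  have mw: "mimw V E \<le> f_width (mim V E) T0" unfolding mimw_def f_branchwidth_def
    using Min_le[OF bw_set_fin[OF fin]] T0(1) by blast
  obtain A where A: "A \<in> cuts T0" "f_width (mim V E) T0 = mim V E A"
    using width_in[OF T0(1) fin] by blast
  have "2 powr (real (mimw V E) / 2) \<le> 2 powr (real (mim V E A) / 2)"
    using mw A by (intro powr_mono) auto
  also have "\<dots> \<le> real (ps F A)" unfolding F_def using ps_ge[OF assms(1) bp PV] .
  also have "\<dots> \<le> real (psw F)" using width_ge[OF T0(1) fin A(1), of "ps F"] T0(2) by simp
  finally show ?thesis using wf mono vc ie by blast
qed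

end
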